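(* Let $d\ge1$ and $C\subset\mathbb R^d$ an adapted cone. Suppose there exist constants $\gamma>0$ and $\alpha>0$ such that $\mathbb P(T_C>n)\ge\gamma n^{-\alpha}$ for all $n\ge1$, and that $\mathbb E(\Vert\xi_1\Vert^{2\alpha+2})<\infty$. Then $\mathbb P\big(\max_{1\le i\le n}\Vert\xi_i\Vert>\sqrt n\,\big|\,T_C>n\big)\to0$ as $n\to\infty$.
   Context: $(\xi_n)_{n\ge1}$ i.i.d. random vectors in $\mathbb R^d$ with mean zero and covariance $\sigma^2I_d$, $\sigma^2>0$; $S_n=\xi_1+\cdots+\xi_n$. A linear cone $C$ ($\lambda C=C$ for all $\lambda>0$) is adapted if convex, with non-empty interior, and $\mathbb P(\xi_1\in C\setminus\{0\})>0$. $T_C=\inf\{n\ge1:S_n\notin C\}$. *)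

theory Defs
  imports "HOL-Probability.Probability"
begin

definition linear_cone :: "'v::real_vector set \<Rightarrow> bool" where
  "linear_cone C \<longleftrightarrow> (\<forall>c::real. c > 0 \<longrightarrow> (\<lambda>x. c *\<^sub>R x) ` C = C)"

definition adapted_cone :: "'a measure \<Rightarrow> ('a \<Rightarrow> 'v::euclidean_space) \<Rightarrow> 'v set \<Rightarrow> bool" where
  "adapted_cone M X C \<longleftrightarrow> linear_cone C \<and> convex C \<and> interior C \<noteq> {} \<and>
     \<P>(\<omega> in M. X \<omega> \<in> C - {0}) > 0"

text \<open>Partial sums S_n = xi_1 + ... + xi_n (steps indexed from 1).\<close>
definition partial_sum :: "(nat \<Rightarrow> 'a \<Rightarrow> 'v::real_vector) \<Rightarrow> nat \<Rightarrow> 'a \<Rightarrow> 'v" where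
  "partial_sum \<xi> n \<omega> = (\<Sum>i=1..n. \<xi> i \<omega>)"

definition exit_time :: "(nat \<Rightarrow> 'a \<Rightarrow> 'v::real_vector) \<Rightarrow> 'v set \<Rightarrow> 'a \<Rightarrow> enat" where
  "exit_time \<xi> C \<omega> =
     (if \<exists>n\<ge>1. partial_sum \<xi> n \<omega> \<notin> C
      then enat (LEAST n. n \<ge> 1 \<and> partial_sum \<xi> n \<omega> \<notin> C) else \<infinity>)"

end

theory Submission
  imports Defs
begin

theorem mainTheorem9:
  fixes M :: "'a measure" and \<xi> :: "nat \<Rightarrow> 'a \<Rightarrow> 'v::euclidean_space"
    and C :: "'v set" and \<sigma>2 \<gamma> \<alpha> :: real
  assumes "prob_space M"
    and meas: "\<And>i. \<xi> i \<in> borel_measurable M"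
    and indep: "prob_space.indep_vars M (\<lambda>_. borel) \<xi> {1..}"
    and ident: "\<And>i. i \<ge> 1 \<Longrightarrow> distr M borel (\<xi> i) = distr M borel (\<xi> 1)"
    and int1: "integrable M (\<xi> 1)"
    and mean0: "(\<integral>\<omega>. \<xi> 1 \<omega> \<partial>M) = 0"
    and int2: "\<And>u. integrable M (\<lambda>\<omega>. (\<xi> 1 \<omega> \<bullet> u)\<^sup>2)"
    and cov: "\<And>u v. (\<integral>\<omega>. (\<xi> 1 \<omega> \<bullet> u) * (\<xi> 1 \<omega> \<bullet> v) \<partial>M) = \<sigma>2 * (u \<bullet> v)"
    and sigma_pos: "\<sigma>2 > 0"
    and adapted: "adapted_cone M (\<xi> 1) C"
    and gamma_pos: "\<gamma> > 0" and alpha_pos: "\<alpha> > 0"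
    and tail: "\<And>n::nat. n \<ge> 1 \<Longrightarrow>
       \<P>(\<omega> in M. exit_time \<xi> C \<omega> > enat n) \<ge> \<gamma> * real n powr (-\<alpha>)"
    and moment: "integrable M (\<lambda>\<omega>. norm (\<xi> 1 \<omega>) powr (2 * \<alpha> + 2))"
  shows "(\<lambda>n::nat. \<P>(\<omega> in M. Max ((\<lambda>i. norm (\<xi> i \<omega>)) ` {1..n}) > sqrt (real n)
            \<bar> exit_time \<xi> C \<omega> > enat n)) \<longlonglongrightarrow> 0"
proof -
  interpret prob_space M by fact
  note meas[measurable]
  define f where "f = (\<lambda>\<omega>. norm (\<xi> 1 \<omega>) powr (2 * \<alpha> + 2))"
  define E where "E n = {\<omega> \<in> space M. sqrt (real n) < norm (\<xi> 1 \<omega>)}" for n :: nat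
  define g where "g n \<omega> = indicator (E n) \<omega> * f \<omega>" for n \<omega>
  have f_meas[measurable]: "f \<in> borel_measurable M" unfolding f_def by measurable
  have E_sets: "E n \<in> sets M" for n unfolding E_def by measurable
  have g_int: "integrable M (g n)" for n
    using integrable_mult_indicator[OF E_sets moment] unfolding g_def f_def by simp
  have lim: "(\<lambda>n. integral\<^sup>L M (g n)) \<longlonglongrightarrow> integral\<^sup>L M (\<lambda>_. 0::real)"
  proof (rule integral_dominated_convergence[where w=f])
    show "(\<lambda>_. 0::real) \<in> borel_measurable M" by simp
    show "g i \<in> borel_measurable M" for i using g_int by auto
    show "integrable M f" using moment by (simp add: f_def)
    show "AE x in M. norm (g i x) \<le> f x" for i
      by (auto simp: g_def f_def indicator_def)
    show "AE x in M. (\<lambda>i. g i x) \<longlonglongrightarrow> 0"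
    proof (rule AE_I2)
      fix x assume x: "x \<in> space M"
      have "eventually (\<lambda>n. g n x = 0) sequentially"
        using eventually_ge_at_top[of "nat \<lceil>(norm (\<xi> 1 x))\<^sup>2\<rceil>"]
      proof eventually_elim
        case (elim n)
        then have "(norm (\<xi> 1 x))\<^sup>2 \<le> real n" by linarith
        then have "norm (\<xi> 1 x) \<le> sqrt (real n)" by (rule real_le_rsqrt)
        then show ?case by (simp add: g_def E_def indicator_def)
      qed
      then show "(\<lambda>i. g i x) \<longlonglongrightarrow> 0" by (rule tendsto_eventually)
    qed
  qed
  then have lim': "(\<lambda>n. integral\<^sup>L M (g n) / \<gamma>) \<longlonglongrightarrow> 0"
    using tendsto_divide_zero by fastforce
  show ?thesis
  proof (rule Lim_transform_bound[OF _ lim'])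
    show "eventually (\<lambda>n. norm (\<P>(\<omega> in M. Max ((\<lambda>i. norm (\<xi> i \<omega>)) ` {1..n}) > sqrt (real n)
            \<bar> exit_time \<xi> C \<omega> > enat n)) \<le> norm (integral\<^sup>L M (g n) / \<gamma>)) sequentially"
      using eventually_ge_at_top[of 1]
    proof eventually_elim
      case (elim n)
      define s where "s = sqrt (real n)"
      define N where "N = \<P>(\<omega> in M. Max ((\<lambda>i. norm (\<xi> i \<omega>)) ` {1..n}) > s \<and> exit_time \<xi> C \<omega> > enat n)"
      define D where "D = \<P>(\<omega> in M. exit_time \<xi> C \<omega> > enat n)"
      have npos: "real n > 0" using elim by simp
      have Dge: "D \<ge> \<gamma> * real n powr (-\<alpha>)" using tail[OF elim] by (simp add: D_def)
      have Dpos: "D > 0" using Dge gamma_pos npos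
        by (smt (verit) mult_pos_pos powr_gt_zero)
      have N0: "N \<ge> 0" by (simp add: N_def)
      have "N \<le> measure M (\<Union>i\<in>{1..n}. {\<omega> \<in> space M. s < norm (\<xi> i \<omega>)})"
        unfolding N_def
      proof (rule finite_measure_mono)
        show "(\<Union>i\<in>{1..n}. {\<omega> \<in> space M. s < norm (\<xi> i \<omega>)}) \<in> sets M" by measurable
        show "{\<omega> \<in> space M. s < Max ((\<lambda>i. norm (\<xi> i \<omega>)) ` {1..n}) \<and> enat n < exit_time \<xi> C \<omega>}
           \<subseteq> (\<Union>i\<in>{1..n}. {\<omega> \<in> space M. s < norm (\<xi> i \<omega>)})"
          using elim by (auto simp: Max_gr_iff)
      qed
      also have "\<dots> \<le> (\<Sum>i\<in>{1..n}. measure M {\<omega> \<in> space M. s < norm (\<xi> i \<omega>)})"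
        by (rule measure_UNION_le) auto
      also have "\<dots> = (\<Sum>i\<in>{1..n}. measure M (E n))"
      proof (rule sum.cong[OF refl])
        fix i assume i: "i \<in> {1..n}"
        have B: "{x::'v. s < norm x} \<in> sets borel" by measurable
        have "measure M {\<omega> \<in> space M. s < norm (\<xi> i \<omega>)} = measure (distr M borel (\<xi> i)) {x. s < norm x}"
          by (subst measure_distr[OF meas B]) (auto intro!: arg_cong[where f="measure M"])
        also have "\<dots> = measure (distr M borel (\<xi> 1)) {x. s < norm x}" using ident[of i] i by simp
        also have "\<dots> = measure M (E n)"
          by (subst measure_distr[OF meas B]) (auto simp: E_def s_def intro!: arg_cong[where f="measure M"])
        finally show "measure M {\<omega> \<in> space M. s < norm (\<xi> i \<omega>)} = measure M (E n)" .
      qed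
      finally have Nle: "N \<le> real n * measure M (E n)" by simp
      have sp: "s powr (2 * \<alpha> + 2) = real n powr (\<alpha> + 1)"
      proof -
        have "s = real n powr (1/2)" unfolding s_def by (simp add: powr_half_sqrt)
        then have "s powr (2 * \<alpha> + 2) = real n powr ((1/2) * (2 * \<alpha> + 2))" by (simp add: powr_powr)
        moreover have "(1/2) * (2 * \<alpha> + 2) = \<alpha> + 1" by simp
        ultimately show ?thesis by metis
      qed
      have "real n powr (\<alpha> + 1) * measure M (E n) = integral\<^sup>L M (\<lambda>\<omega>. indicator (E n) \<omega> * real n powr (\<alpha> + 1))"
        using E_sets by simp
      also have "\<dots> \<le> integral\<^sup>L M (g n)"
      proof (rule integral_mono)
        show "integrable M (\<lambda>\<omega>. indicator (E n) \<omega> * real n powr (\<alpha> + 1))"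
          using E_sets by (simp add: emeasure_eq_measure)
        show "integrable M (g n)" by (rule g_int)
        fix x assume x: "x \<in> space M"
        show "indicator (E n) x * real n powr (\<alpha> + 1) \<le> g n x"
        proof (cases "x \<in> E n")
          case True
          then have "s \<le> norm (\<xi> 1 x)" by (simp add: E_def s_def)
          then have "s powr (2 * \<alpha> + 2) \<le> f x" unfolding f_def
            using alpha_pos by (intro powr_mono2) (auto simp: s_def)
          then show ?thesis using True sp by (simp add: g_def)
        qed (simp add: g_def)
      qed
      finally have key: "real n powr (\<alpha> + 1) * measure M (E n) \<le> integral\<^sup>L M (g n)" .
      have "N / D \<le> N / (\<gamma> * real n powr (-\<alpha>))"
        using Dge N0 gamma_pos npos Dpos by (intro divide_left_mono) auto
      also have "\<dots> = N * real n powr \<alpha> / \<gamma>"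
        using npos gamma_pos by (simp add: powr_minus field_simps)
      also have "\<dots> \<le> real n * measure M (E n) * real n powr \<alpha> / \<gamma>"
        using Nle gamma_pos by (intro divide_right_mono mult_right_mono) auto
      also have "real n * measure M (E n) * real n powr \<alpha> = real n powr (\<alpha> + 1) * measure M (E n)"
        using npos by (simp add: powr_add)
      also have "\<dots> / \<gamma> \<le> integral\<^sup>L M (g n) / \<gamma>"
        using key gamma_pos by (intro divide_right_mono) auto
      finally have "N / D \<le> integral\<^sup>L M (g n) / \<gamma>" .
      moreover have "N / D \<ge> 0" using N0 Dpos by simp
      ultimately show ?case unfolding cond_prob_def N_def D_def s_def
        by (smt (verit) real_norm_def abs_ge_self divide_right_mono gamma_pos)
    qed
  qed
qed

end
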